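(* Let $Y$ be a $\mathbb{Q}$-vector space with an involution $y\mapsto\bar y$, and let $X^0_{(n)}=\sum_{w\in B_n,\ w_1<w_2<\dots<w_n}w\in\mathbb{Q}B_n$. Then for all $y_1,\dots,y_n\in Y$, $$(y_1\otimes\cdots\otimes y_n)\cdot X^0_{(n)}=\tau\Bigl(\cdots\tau\bigl(\tau(y_1)\,y_2\bigr)\,y_3\cdots y_n\Bigr).$$
   Context: $B_n$: signed permutations $w=w_1\dots w_n$ (bijections of $\{\pm1,\dots,\pm n\}$ with $w(-i)=-w(i)$), values ordered $\cdots<-2<-1<1<2<\cdots$. $B_n$ acts on $Y^{\otimes n}$ on the right by $(y_1\otimes\cdots\otimes y_n)\cdot w=y_{w_1}\otimes\cdots\otimes y_{w_n}$, where $y_{-i}$ means $\bar y_i$; this is extended linearly to $\mathbb{Q}B_n$. In the tensor algebra $TY=\bigoplus_{m\ge0}Y^{\otimes m}$, juxtaposition denotes the tensor product, and the symmetrizer $\tau:TY\to TY$ is the linear map $\tau(y_1\otimes\cdots\otimes y_m)=y_1\otimes\cdots\otimes y_m+\bar y_m\otimes\cdots\otimes\bar y_1$. *)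

theory Defs
  imports Complex_Main
begin

text \<open>The hyperoctahedral group B_n: bijections w of {+-1,...,+-n} with w(-i) = -w(i),
  represented as functions int => int that are the identity outside {+-1,...,+-n}.
  The value order ... < -2 < -1 < 1 < 2 < ... is the order of int.\<close>
definition signed_perms :: "nat \<Rightarrow> (int \<Rightarrow> int) set" where
  "signed_perms n = {w. bij_betw w {i. 1 \<le> \<bar>i\<bar> \<and> \<bar>i\<bar> \<le> int n} {i. 1 \<le> \<bar>i\<bar> \<and> \<bar>i\<bar> \<le> int n}
      \<and> (\<forall>i. w (- i) = - w i)
      \<and> (\<forall>i. \<not> (1 \<le> \<bar>i\<bar> \<and> \<bar>i\<bar> \<le> int n) \<longrightarrow> w i = i)}"

definition incr_signed_perms :: "nat \<Rightarrow> (int \<Rightarrow> int) set" where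
  "incr_signed_perms n = {w \<in> signed_perms n. \<forall>i::int. 1 \<le> i \<and> i < int n \<longrightarrow> w i < w (i + 1)}"

text \<open>y_k for k in {+-1..+-n}, with y_{-i} = bar y_i; ys lists y_1..y_n (1-indexed).\<close>
definition yidx :: "('y \<Rightarrow> 'y) \<Rightarrow> 'y list \<Rightarrow> int \<Rightarrow> 'y" where
  "yidx bar ys k = (if 0 < k then ys ! (nat k - 1) else bar (ys ! (nat (- k) - 1)))"

text \<open>The pure tensor (y_1 ... y_n) . w = y_{w_1} ... y_{w_n}, as the word of its factors.\<close>
definition act_word :: "('y \<Rightarrow> 'y) \<Rightarrow> 'y list \<Rightarrow> (int \<Rightarrow> int) \<Rightarrow> 'y list" where
  "act_word bar ys w = map (\<lambda>i. yidx bar ys (w (int i))) [1..<length ys + 1]"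

text \<open>Formal sums of pure tensors (all coefficients 1) are lists of words.
  The symmetrizer tau on a pure tensor, extended linearly.\<close>
definition tau :: "('y \<Rightarrow> 'y) \<Rightarrow> 'y list list \<Rightarrow> 'y list list" where
  "tau bar T = concat (map (\<lambda>ws. [ws, rev (map bar ws)]) T)"

definition rmul :: "'y list list \<Rightarrow> 'y \<Rightarrow> 'y list list" where
  "rmul T y = map (\<lambda>ws. ws @ [y]) T"

text \<open>tau( ... tau(tau(y_1) y_2) y_3 ... y_n ).\<close>
fun tau_iter :: "('y \<Rightarrow> 'y) \<Rightarrow> 'y list \<Rightarrow> 'y list list" where
  "tau_iter bar [] = [[]]"
| "tau_iter bar (y # ys) = foldl (\<lambda>T z. tau bar (rmul T z)) (tau bar [[y]]) ys"

definition lin_involution :: "(rat \<Rightarrow> 'y::ab_group_add \<Rightarrow> 'y) \<Rightarrow> ('y \<Rightarrow> 'y) \<Rightarrow> bool" where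
  "lin_involution sc bar \<longleftrightarrow> (\<forall>x y. bar (x + y) = bar x + bar y) \<and> (\<forall>c x. bar (sc c x) = sc c (bar x))
     \<and> (\<forall>x. bar (bar x) = x)"

definition multilinear :: "(rat \<Rightarrow> 'y::ab_group_add \<Rightarrow> 'y) \<Rightarrow> (rat \<Rightarrow> 'v::ab_group_add \<Rightarrow> 'v) \<Rightarrow> nat
    \<Rightarrow> ('y list \<Rightarrow> 'v) \<Rightarrow> bool" where
  "multilinear scY scV n f \<longleftrightarrow> (\<forall>ws i a b c. length ws = n \<and> i < n \<longrightarrow>
      f (ws[i := a + b]) = f (ws[i := a]) + f (ws[i := b]) \<and> f (ws[i := scY c a]) = scV c (f (ws[i := a])))"

end

theory Submission
  imports Defs
begin

lemma sls_eq:
  fixes l :: "int list"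
  assumes "sorted_wrt (<) l" "set l = A"
  shows "sorted_list_of_set A = l"
  using assms strict_sorted_equal[of "sorted_list_of_set A" l]
  by (metis List.finite_set sorted_list_of_set.set_sorted_key_list_of_set strict_sorted_list_of_set)

lemma tau_iter_snoc: "tau_iter bar (ys @ [y]) = tau bar (rmul (tau_iter bar ys) y)"
  by (cases ys) (auto simp: rmul_def)

lemma sum_tau_rmul:
  fixes g :: "'a list \<Rightarrow> 'b::comm_monoid_add"
  shows "sum_list (map g (tau bar (rmul T y))) =
   sum_list (map (\<lambda>u. g (u @ [y]) + g (rev (map bar (u @ [y])))) T)"
  by (induction T) (auto simp: tau_def rmul_def ac_simps)

definition PM :: "nat \<Rightarrow> int set" where
  "PM n = {i. 1 \<le> \<bar>i\<bar> \<and> \<bar>i\<bar> \<le> int n}"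

definition Vs :: "nat \<Rightarrow> int set set" where
  "Vs n = {V. V \<subseteq> PM n \<and> (\<forall>j. 1 \<le> j \<and> j \<le> int n \<longrightarrow> (j \<in> V \<longleftrightarrow> - j \<notin> V))}"

lemma finite_PM: "finite (PM n)"
proof -
  have "PM n \<subseteq> {- int n .. int n}" by (auto simp: PM_def)
  then show ?thesis by (rule finite_subset) simp
qed

lemma Vs_finite: "V \<in> Vs n \<Longrightarrow> finite V"
  using finite_PM by (auto simp: Vs_def intro: finite_subset)

lemma Vs_0: "Vs 0 = {{}}"
  by (auto simp: Vs_def PM_def)

lemma Vs_Suc: "Vs (Suc n) = insert (int n + 1) ` Vs n \<union> insert (- int n - 1) ` Vs n"
proof (intro equalityI subsetI)
  fix V assume V: "V \<in> Vs (Suc n)"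
  let ?W = "V - {int n + 1, - int n - 1}"
  have W: "?W \<in> Vs n" using V by (auto simp: Vs_def PM_def)
  have key: "int n + 1 \<in> V \<longleftrightarrow> - int n - 1 \<notin> V"
    using V unfolding Vs_def by (auto dest!: spec[of _ "int n + 1"])
  have "int n + 1 \<in> V \<or> - int n - 1 \<in> V" using key by blast
  moreover have "V = insert (int n + 1) ?W" if "int n + 1 \<in> V"
    using that key by blast
  moreover have "V = insert (- int n - 1) ?W" if "- int n - 1 \<in> V"
    using that key by blast
  ultimately show "V \<in> insert (int n + 1) ` Vs n \<union> insert (- int n - 1) ` Vs n"
  proof (elim disjE)
    assume "int n + 1 \<in> V"
    then have "V \<in> insert (int n + 1) ` Vs n"
      using W \<open>int n + 1 \<in> V \<Longrightarrow> V = insert (int n + 1) ?W\<close> by (intro rev_image_eqI) auto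
    then show ?thesis by (rule UnI1)
  next
    assume "- int n - 1 \<in> V"
    then have "V \<in> insert (- int n - 1) ` Vs n"
      using W \<open>- int n - 1 \<in> V \<Longrightarrow> V = insert (- int n - 1) ?W\<close> by (intro rev_image_eqI) auto
    then show ?thesis by (rule UnI2)
  qed
next
  fix V assume "V \<in> insert (int n + 1) ` Vs n \<union> insert (- int n - 1) ` Vs n"
  then obtain W x where W: "W \<in> Vs n" "V = insert x W" "x = int n + 1 \<or> x = - int n - 1" by blast
  have Wsub: "W \<subseteq> PM n" and Wc: "\<forall>j. 1 \<le> j \<and> j \<le> int n \<longrightarrow> (j \<in> W \<longleftrightarrow> - j \<notin> W)"
    using W(1) by (simp_all add: Vs_def)
  have "PM n \<subseteq> PM (Suc n)" by (auto simp: PM_def)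
  moreover have "x \<in> PM (Suc n)" using W(3) by (auto simp: PM_def)
  ultimately have sub: "V \<subseteq> PM (Suc n)" using Wsub W(2) by blast
  have c: "\<forall>j. 1 \<le> j \<and> j \<le> int (Suc n) \<longrightarrow> (j \<in> V \<longleftrightarrow> - j \<notin> V)"
  proof (intro allI impI)
    fix j :: int assume j: "1 \<le> j \<and> j \<le> int (Suc n)"
    show "j \<in> V \<longleftrightarrow> - j \<notin> V"
    proof (cases "j = int n + 1")
      case True
      have "j \<notin> W" "- j \<notin> W" using Wsub True by (auto simp: PM_def)
      then show ?thesis using W(2,3) True by auto
    next
      case False
      then have "j \<le> int n" using j by simp
      then have "x \<noteq> j" "x \<noteq> - j" using W(3) j by auto
      then show ?thesis using W(2) Wc j \<open>j \<le> int n\<close> by auto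
    qed
  qed
  show "V \<in> Vs (Suc n)" unfolding Vs_def using sub c by blast
qed

lemma yidx_snoc:
  assumes "1 \<le> \<bar>k\<bar>" "\<bar>k\<bar> \<le> int (length ys)"
  shows "yidx bar (ys @ [y]) k = yidx bar ys k"
  using assms by (auto simp: yidx_def nth_append)

lemma yidx_neg:
  assumes "\<forall>x. bar (bar x) = x" "k \<noteq> 0"
  shows "yidx bar ys (- k) = bar (yidx bar ys k)"
  using assms by (auto simp: yidx_def)

lemma sls_insert_max:
  fixes V :: "int set"
  assumes "finite V" "\<forall>v\<in>V. v < x"
  shows "sorted_list_of_set (insert x V) = sorted_list_of_set V @ [x]"
  by (rule sls_eq) (use assms in \<open>auto simp: sorted_wrt_append strict_sorted_list_of_set\<close>)

lemma sls_insert_min: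
  fixes V :: "int set"
  assumes "finite V" "\<forall>v\<in>V. x < v"
  shows "sorted_list_of_set (insert x V) = x # sorted_list_of_set V"
  by (rule sls_eq) (use assms in \<open>auto simp: strict_sorted_list_of_set\<close>)

lemma sls_uminus:
  fixes V :: "int set"
  assumes "finite V"
  shows "sorted_list_of_set (uminus ` V) = rev (map uminus (sorted_list_of_set V))"
  by (rule sls_eq) (use assms in \<open>auto simp: sorted_wrt_rev sorted_wrt_map strict_sorted_list_of_set\<close>)

lemma Vs_uminus: "V \<in> Vs n \<Longrightarrow> uminus ` V \<in> Vs n"
proof -
  assume V: "V \<in> Vs n"
  have sub: "V \<subseteq> PM n" and c: "\<forall>j. 1 \<le> j \<and> j \<le> int n \<longrightarrow> (j \<in> V \<longleftrightarrow> - j \<notin> V)"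
    using V by (simp_all add: Vs_def)
  have m: "j \<in> uminus ` V \<longleftrightarrow> - j \<in> V" for j :: int
    by (metis image_iff minus_minus)
  have "uminus ` V \<subseteq> PM n" using sub by (auto simp: PM_def)
  moreover have "\<forall>j. 1 \<le> j \<and> j \<le> int n \<longrightarrow> (j \<in> uminus ` V \<longleftrightarrow> - j \<notin> uminus ` V)"
    using c by (simp add: m)
  ultimately show ?thesis by (simp add: Vs_def)
qed

lemma Vs_sub: "V \<in> Vs n \<Longrightarrow> v \<in> V \<Longrightarrow> 1 \<le> \<bar>v\<bar> \<and> \<bar>v\<bar> \<le> int n"
  unfolding Vs_def PM_def by blast


lemma main1:
  fixes g :: "'y list \<Rightarrow> 'b::comm_monoid_add"
  assumes inv: "\<forall>x. bar (bar x) = x"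
  shows "sum_list (map g (tau_iter bar ys)) =
    (\<Sum>V\<in>Vs (length ys). g (map (yidx bar ys) (sorted_list_of_set V)))"
  using inv
proof (induction ys arbitrary: g rule: rev_induct)
  case Nil
  then show ?case by (simp add: Vs_0)
next
  case (snoc x xs)
  define n where "n = length xs"
  define W where "W V = map (yidx bar xs) (sorted_list_of_set V)" for V
  define W' where "W' V = map (yidx bar (xs @ [x])) (sorted_list_of_set V)" for V
  have L: "sum_list (map g (tau_iter bar (xs @ [x]))) =
     (\<Sum>V\<in>Vs n. g (W V @ [x]) + g (rev (map bar (W V @ [x]))))"
    unfolding tau_iter_snoc sum_tau_rmul W_def n_def using snoc by simp
  have fin: "finite (Vs n)"
  proof -
    have "Vs n \<subseteq> Pow (PM n)" by (auto simp: Vs_def)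
    then show ?thesis using finite_PM by (meson finite_Pow_iff finite_subset)
  qed
  have notin1: "int n + 1 \<notin> V" "- int n - 1 \<notin> V" if "V \<in> Vs n" for V
    using Vs_sub[OF that] by force+
  have R: "(\<Sum>V\<in>Vs (Suc n). g (W' V)) =
     (\<Sum>V\<in>Vs n. g (W' (insert (int n + 1) V))) + (\<Sum>V\<in>Vs n. g (W' (insert (- int n - 1) V)))"
  proof -
    have d: "insert (int n + 1) ` Vs n \<inter> insert (- int n - 1) ` Vs n = {}"
    proof (rule ccontr)
      assume "\<not> ?thesis"
      then obtain A B where "A \<in> Vs n" "B \<in> Vs n" "insert (int n + 1) A = insert (- int n - 1) B" by blast
      then have "int n + 1 \<in> insert (- int n - 1) B" by blast
      then show False using notin1(1)[OF \<open>B \<in> Vs n\<close>] by simp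
    qed
    have i1: "inj_on (insert (int n + 1)) (Vs n)"
      unfolding inj_on_def using notin1 by (metis Diff_insert_absorb)
    have i2: "inj_on (insert (- int n - 1)) (Vs n)"
      unfolding inj_on_def using notin1 by (metis Diff_insert_absorb)
    show ?thesis unfolding Vs_Suc
      by (subst sum.union_disjoint) (use fin d i1 i2 in \<open>auto simp: sum.reindex\<close>)
  qed
  have A: "W' (insert (int n + 1) V) = W V @ [x]" if V: "V \<in> Vs n" for V
  proof -
    have "sorted_list_of_set (insert (int n + 1) V) = sorted_list_of_set V @ [int n + 1]"
      by (rule sls_insert_max) (use Vs_finite[OF V] Vs_sub[OF V] in force)+
    moreover have "map (yidx bar (xs @ [x])) (sorted_list_of_set V) = W V"
      unfolding W_def using Vs_finite[OF V] Vs_sub[OF V]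
      by (intro map_cong refl yidx_snoc) (auto simp: n_def)
    moreover have "yidx bar (xs @ [x]) (int n + 1) = x"
      by (simp add: yidx_def n_def nat_add_distrib)
    ultimately show ?thesis unfolding W'_def by simp
  qed
  have B: "W' (insert (- int n - 1) (uminus ` V)) = rev (map bar (W V @ [x]))" if V: "V \<in> Vs n" for V
  proof -
    have fV: "finite V" using Vs_finite[OF V] .
    have "sorted_list_of_set (insert (- int n - 1) (uminus ` V)) = (- int n - 1) # rev (map uminus (sorted_list_of_set V))"
      using sls_insert_min[of "uminus ` V" "- int n - 1"] sls_uminus[OF fV] fV Vs_sub[OF V] by force
    moreover have "yidx bar (xs @ [x]) (- int n - 1) = bar x"
      by (simp add: yidx_def n_def nat_add_distrib)
    moreover have "map (yidx bar (xs @ [x]) \<circ> uminus) (sorted_list_of_set V) = map (bar \<circ> yidx bar xs) (sorted_list_of_set V)"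
    proof (rule map_cong[OF refl])
      fix k assume "k \<in> set (sorted_list_of_set V)"
      then have k: "k \<in> V" using fV by simp
      show "(yidx bar (xs @ [x]) \<circ> uminus) k = (bar \<circ> yidx bar xs) k"
        using Vs_sub[OF V k] yidx_snoc[of "-k" xs bar x] yidx_neg[OF snoc.prems, of k xs]
        by (auto simp: n_def)
    qed
    ultimately show ?thesis unfolding W'_def W_def by (simp add: rev_map)
  qed
  have B2: "(\<Sum>V\<in>Vs n. g (W' (insert (- int n - 1) V))) = (\<Sum>V\<in>Vs n. g (W' (insert (- int n - 1) (uminus ` V))))"
    by (rule sum.reindex_bij_witness[where i="image uminus" and j="image uminus"])
       (auto simp: Vs_uminus image_image)
  have "(\<Sum>V\<in>Vs (Suc n). g (W' V)) = (\<Sum>V\<in>Vs n. g (W V @ [x]) + g (rev (map bar (W V @ [x]))))"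
    unfolding R B2 sum.distrib using A B by (simp cong: sum.cong)
  then show ?case using L by (simp add: W'_def n_def)
qed


definition hperm :: "nat \<Rightarrow> int set \<Rightarrow> int \<Rightarrow> int" where
  "hperm n V i = (if 1 \<le> i \<and> i \<le> int n then sorted_list_of_set V ! (nat i - 1)
     else if 1 \<le> - i \<and> - i \<le> int n then - (sorted_list_of_set V ! (nat (- i) - 1)) else i)"

lemma card_Vs: "V \<in> Vs n \<Longrightarrow> card V = n"
proof (induction n arbitrary: V)
  case 0
  then show ?case by (simp add: Vs_0)
next
  case (Suc n)
  then obtain W x where W: "W \<in> Vs n" "V = insert x W" "x = int n + 1 \<or> x = - int n - 1"
    unfolding Vs_Suc by blast
  have "x \<notin> W" using Vs_sub[OF W(1)] W(3) by force
  then show ?case using W Suc.IH Vs_finite[OF W(1)] by simp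
qed

lemma Vs_no_neg: "V \<in> Vs n \<Longrightarrow> v \<in> V \<Longrightarrow> - v \<notin> V"
proof -
  assume V: "V \<in> Vs n" and v: "v \<in> V"
  have b: "1 \<le> \<bar>v\<bar> \<and> \<bar>v\<bar> \<le> int n" using Vs_sub[OF V v] .
  have c: "\<forall>j. 1 \<le> j \<and> j \<le> int n \<longrightarrow> (j \<in> V \<longleftrightarrow> - j \<notin> V)" using V by (simp add: Vs_def)
  show "- v \<notin> V"
  proof (cases "v > 0")
    case True
    then show ?thesis using c b v by auto
  next
    case False
    then show ?thesis using c[rule_format, of "- v"] b v by auto
  qed
qed

lemma hperm_img: "V \<in> Vs n \<Longrightarrow> hperm n V ` {1..int n} = V"
proof -
  assume V: "V \<in> Vs n"
  define s where "s = sorted_list_of_set V"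
  have fV: "finite V" using Vs_finite[OF V] .
  have len: "length s = n" using card_Vs[OF V] by (simp add: s_def)
  have st: "set s = V" using fV by (simp add: s_def)
  show ?thesis
  proof (intro equalityI subsetI)
    fix v assume "v \<in> hperm n V ` {1..int n}"
    then obtain i where i: "1 \<le> i" "i \<le> int n" "v = hperm n V i" by auto
    then have "v = s ! (nat i - 1)" by (simp add: hperm_def s_def)
    moreover have "nat i - 1 < length s" using i len by linarith
    ultimately show "v \<in> V" using st nth_mem by blast
  next
    fix v assume "v \<in> V"
    then obtain k where k: "k < n" "v = s ! k" using st len by (metis in_set_conv_nth)
    have "hperm n V (int k + 1) = v" using k by (simp add: hperm_def s_def nat_add_distrib)
    moreover have "int k + 1 \<in> {1..int n}" using k by simp
    ultimately show "v \<in> hperm n V ` {1..int n}" by force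
  qed
qed

lemma hperm_act:
  assumes V: "V \<in> Vs n" and len: "length ys = n"
  shows "act_word bar ys (hperm n V) = map (yidx bar ys) (sorted_list_of_set V)"
proof (rule nth_equalityI)
  have c: "length (sorted_list_of_set V) = n" using card_Vs[OF V] by simp
  show "length (act_word bar ys (hperm n V)) = length (map (yidx bar ys) (sorted_list_of_set V))"
    using c len by (simp add: act_word_def del: upt_Suc)
  fix i assume "i < length (act_word bar ys (hperm n V))"
  then have i: "i < n" using len by (simp add: act_word_def del: upt_Suc)
  have e: "[1..<length ys + 1] ! i = i + 1" using i len by (simp del: upt_Suc)
  show "act_word bar ys (hperm n V) ! i = map (yidx bar ys) (sorted_list_of_set V) ! i"
    using i len c e by (simp add: act_word_def hperm_def nat_add_distrib del: upt_Suc)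
qed


lemma hperm_in:
  assumes V: "V \<in> Vs n"
  shows "hperm n V \<in> incr_signed_perms n"
proof -
  define s where "s = sorted_list_of_set V"
  have fV: "finite V" using Vs_finite[OF V] .
  have len: "length s = n" using card_Vs[OF V] by (simp add: s_def)
  have st: "set s = V" using fV by (simp add: s_def)
  have ss: "sorted_wrt (<) s" by (simp add: s_def strict_sorted_list_of_set)
  have ds: "distinct s" using ss strict_sorted_iff by blast
  let ?A = "{i::int. 1 \<le> \<bar>i\<bar> \<and> \<bar>i\<bar> \<le> int n}"
  let ?h = "hperm n V"
  have hpos: "?h i = s ! (nat i - 1)" if "1 \<le> i" "i \<le> int n" for i
    using that by (simp add: hperm_def s_def)
  have hneg: "?h i = - (s ! (nat (- i) - 1))" if "1 \<le> - i" "- i \<le> int n" for i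
    using that by (simp add: hperm_def s_def)
  have hout: "?h i = i" if "\<not> (1 \<le> \<bar>i\<bar> \<and> \<bar>i\<bar> \<le> int n)" for i
    using that by (auto simp: hperm_def)
  have odd: "?h (- i) = - ?h i" for i
    by (auto simp: hperm_def)
  have inV: "s ! (nat i - 1) \<in> V" if "1 \<le> i" "i \<le> int n" for i
  proof -
    have "nat i - 1 < length s" using that len by linarith
    then show ?thesis using st nth_mem by blast
  qed
  have sub: "?h ` ?A \<subseteq> ?A"
  proof
    fix v assume "v \<in> ?h ` ?A"
    then obtain i where i: "i \<in> ?A" "v = ?h i" by blast
    show "v \<in> ?A"
    proof (cases "i > 0")
      case True
      then have "v \<in> V" using i hpos inV by auto
      then show ?thesis using Vs_sub[OF V] by blast
    next
      case False
      then have "- v \<in> V" using i hneg inV[of "- i"] by auto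
      then show ?thesis using Vs_sub[OF V] by fastforce
    qed
  qed
  have injs: "a = b" if "1 \<le> a" "a \<le> int n" "1 \<le> b" "b \<le> int n" "s ! (nat a - 1) = s ! (nat b - 1)" for a b
  proof -
    have "nat a - 1 < length s" "nat b - 1 < length s" using that len by linarith+
    then have "nat a - 1 = nat b - 1" using that ds nth_eq_iff_index_eq by blast
    then show ?thesis using that by linarith
  qed
  have inj: "inj_on ?h ?A"
  proof (rule inj_onI)
    fix a b assume a: "a \<in> ?A" and b: "b \<in> ?A" and e: "?h a = ?h b"
    show "a = b"
    proof (cases "a > 0"; cases "b > 0")
      assume "a > 0" "b > 0"
      then show ?thesis using a b e hpos injs by auto
    next
      assume "a > 0" "\<not> b > 0"
      then have "s ! (nat a - 1) \<in> V" "- s ! (nat a - 1) \<in> V"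
        using a b e hpos hneg inV[of a] inV[of "- b"] by auto
      then show ?thesis using Vs_no_neg[OF V] by blast
    next
      assume "\<not> a > 0" "b > 0"
      then have "s ! (nat (- a) - 1) \<in> V" "- s ! (nat (- a) - 1) \<in> V"
        using a b e hpos hneg inV[of b] inV[of "- a"] by auto
      then show ?thesis using Vs_no_neg[OF V] by blast
    next
      assume "\<not> a > 0" "\<not> b > 0"
      then have "- a = - b" using a b e hneg injs[of "- a" "- b"] by auto
      then show ?thesis by simp
    qed
  qed
  have finA: "finite ?A" using finite_PM by (simp add: PM_def)
  have bij: "bij_betw ?h ?A ?A"
    using endo_inj_surj[OF finA sub inj] inj by (simp add: bij_betw_def)
  have incr: "?h i < ?h (i + 1)" if "1 \<le> i" "i < int n" for i
  proof -
    have "?h i = s ! (nat i - 1)" "?h (i + 1) = s ! (nat i)"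
      using that hpos[of i] hpos[of "i + 1"] by (auto simp: nat_add_distrib)
    moreover have "nat i - 1 < nat i" "nat i < length s" using that len by linarith+
    ultimately show ?thesis using ss sorted_wrt_nth_less by fastforce
  qed
  have sp: "?h \<in> signed_perms n"
    unfolding signed_perms_def using bij odd hout by simp
  show ?thesis unfolding incr_signed_perms_def
  proof (rule CollectI, rule conjI[OF sp], intro allI impI)
    fix i :: int assume "1 \<le> i \<and> i < int n"
    then show "?h i < ?h (i + 1)" using incr by blast
  qed
qed


lemma incr_trans:
  fixes w :: "int \<Rightarrow> int"
  assumes "\<forall>i::int. 1 \<le> i \<and> i < int n \<longrightarrow> w i < w (i + 1)"
  shows "1 \<le> a \<Longrightarrow> a + int d + 1 \<le> int n \<Longrightarrow> w a < w (a + int d + 1)"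
proof (induction d)
  case 0
  then show ?case using assms by simp
next
  case (Suc d)
  then have "w a < w (a + int d + 1)" by simp
  also have "w (a + int d + 1) < w (a + int d + 1 + 1)"
    by (rule assms[rule_format]) (use Suc.prems in simp)
  also have "a + int d + 1 + 1 = a + int (Suc d) + 1" by simp
  finally show ?case .
qed

lemma hperm_surj:
  assumes w: "w \<in> incr_signed_perms n"
  shows "\<exists>V\<in>Vs n. w = hperm n V"
proof -
  let ?A = "{i::int. 1 \<le> \<bar>i\<bar> \<and> \<bar>i\<bar> \<le> int n}"
  have bij: "bij_betw w ?A ?A" and odd: "\<And>i. w (- i) = - w i"
    and out: "\<And>i. \<not> (1 \<le> \<bar>i\<bar> \<and> \<bar>i\<bar> \<le> int n) \<Longrightarrow> w i = i"
    and inc: "\<forall>i::int. 1 \<le> i \<and> i < int n \<longrightarrow> w i < w (i + 1)"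
    using w by (auto simp: incr_signed_perms_def signed_perms_def)
  have mono: "w a < w b" if "1 \<le> a" "a < b" "b \<le> int n" for a b
    using incr_trans[OF inc, of a "nat (b - a - 1)"] that by simp
  define l where "l = map (\<lambda>k. w (int k)) [1..<n+1]"
  define V where "V = set l"
  have memV: "v \<in> V \<longleftrightarrow> (\<exists>i. 1 \<le> i \<and> i \<le> int n \<and> v = w i)" for v
  proof
    assume "v \<in> V"
    then obtain k where "k \<in> {1..<n+1}" "v = w (int k)" by (auto simp: V_def l_def simp del: upt_Suc)
    then show "\<exists>i. 1 \<le> i \<and> i \<le> int n \<and> v = w i" by (intro exI[of _ "int k"]) auto
  next
    assume "\<exists>i. 1 \<le> i \<and> i \<le> int n \<and> v = w i"
    then obtain i where i: "1 \<le> i" "i \<le> int n" "v = w i" by blast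
    then have "nat i \<in> {1..<n+1}" "v = w (int (nat i))" by auto
    then show "v \<in> V" unfolding V_def l_def by (metis image_eqI set_map set_upt)
  qed
  have winj: "w a = w b \<Longrightarrow> a \<in> ?A \<Longrightarrow> b \<in> ?A \<Longrightarrow> a = b" for a b
    using bij by (auto simp: bij_betw_def inj_on_def)
  have wA: "w a \<in> ?A" if "a \<in> ?A" for a using bij that by (auto simp: bij_betw_def)
  have wsurj: "\<exists>i\<in>?A. j = w i" if "j \<in> ?A" for j
    using bij that by (auto simp: bij_betw_def)
  have VVs: "V \<in> Vs n"
    unfolding Vs_def
  proof (intro CollectI conjI allI impI)
    show "V \<subseteq> PM n" using memV wA by (auto simp: PM_def)
  next
    fix j :: int assume j: "1 \<le> j \<and> j \<le> int n"
    then obtain i where i: "i \<in> ?A" "j = w i" using wsurj by force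
    show "j \<in> V \<longleftrightarrow> - j \<notin> V"
    proof (cases "i > 0")
      case True
      have "- j \<notin> V"
      proof
        assume "- j \<in> V"
        then obtain b where b: "1 \<le> b" "b \<le> int n" "- j = w b" using memV[of "- j"] by blast
        then have "w (- b) = w i" using odd i by simp
        then have "- b = i" using winj[of "- b" i] b i by auto
        then show False using b True by simp
      qed
      moreover have "j \<in> V" using i True by (intro memV[THEN iffD2] exI[of _ i]) auto
      ultimately show ?thesis by blast
    next
      case False
      have "j \<notin> V"
      proof
        assume "j \<in> V"
        then obtain b where b: "1 \<le> b" "b \<le> int n" "j = w b" using memV[of j] by blast
        have "b = i" by (rule winj) (use b i in auto)
        then show False using b False by simp
      qed
      moreover have "- j \<in> V" using i False odd[of i] by (intro memV[THEN iffD2] exI[of _ "- i"]) auto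
      ultimately show ?thesis by blast
    qed
  qed
  have sl: "sorted_list_of_set V = l"
  proof (rule sls_eq)
    show "set l = V" by (simp add: V_def)
    show "sorted_wrt (<) l"
      unfolding l_def sorted_wrt_map
      by (rule sorted_wrt_mono_rel[OF _ sorted_wrt_upt]) (auto intro: mono)
  qed
  have lnth: "l ! k = w (int k + 1)" if "k < n" for k
    using that by (simp add: l_def add.commute del: upt_Suc)
  have "w = hperm n V"
  proof
    fix i
    show "w i = hperm n V i"
    proof (cases "1 \<le> i \<and> i \<le> int n")
      case True
      have "nat i - 1 < n" "int (nat i - 1) + 1 = i" using True by linarith+
      then have "l ! (nat i - 1) = w i" using lnth by metis
      then show ?thesis using True by (simp add: hperm_def sl)
    next
      case F1: False
      show ?thesis
      proof (cases "1 \<le> - i \<and> - i \<le> int n")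
        case True
        have "nat (- i) - 1 < n" "int (nat (- i) - 1) + 1 = - i" using True by linarith+
        then have "l ! (nat (- i) - 1) = w (- i)" using lnth by metis
        then show ?thesis using True F1 odd[of i] by (simp add: hperm_def sl)
      next
        case False
        have "\<not> (1 \<le> \<bar>i\<bar> \<and> \<bar>i\<bar> \<le> int n)" using F1 False by (simp add: abs_if)
        then have "w i = i" by (rule out)
        moreover have "hperm n V i = i" using F1 False unfolding hperm_def by (auto split: if_splits)
        ultimately show ?thesis by simp
      qed
    qed
  qed
  then show ?thesis using VVs by blast
qed


theorem proposition8p7:
  fixes scY :: "rat \<Rightarrow> 'y::ab_group_add \<Rightarrow> 'y" and bar :: "'y \<Rightarrow> 'y"
    and scV :: "rat \<Rightarrow> 'v::ab_group_add \<Rightarrow> 'v" and f :: "'y list \<Rightarrow> 'v"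
    and ys :: "'y list" and n :: nat
  assumes "module scY" and "lin_involution scY bar"
    and "length ys = n" and "1 \<le> n"
    and "module scV" and "multilinear scY scV n f"
  shows "(\<Sum>w\<in>incr_signed_perms n. f (act_word bar ys w)) = sum_list (map f (tau_iter bar ys))"
proof -
  have inv: "\<forall>x. bar (bar x) = x" using assms(2) by (simp add: lin_involution_def)
  have inj: "inj_on (hperm n) (Vs n)"
    by (rule inj_onI) (metis hperm_img)
  have img: "incr_signed_perms n = hperm n ` Vs n"
    using hperm_in hperm_surj by blast
  have "(\<Sum>w\<in>incr_signed_perms n. f (act_word bar ys w)) =
      (\<Sum>V\<in>Vs n. f (map (yidx bar ys) (sorted_list_of_set V)))"
    by (rule sum.reindex_cong[OF inj img]) (simp add: hperm_act assms(3))
  also have "\<dots> = sum_list (map f (tau_iter bar ys))"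
    using main1[OF inv, of f ys] assms(3) by simp
  finally show ?thesis .
qed

end
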